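(* Let $G=(V,E)$ be an infinite, connected, locally finite, vertex-transitive graph, $o\in V$, $\Gamma\subset\operatorname{Aut}(G)$ a group acting transitively on $V$, and $\mathbb{P}$ a $\Gamma$-invariant and ergodic probability measure on $\mathbb{R}^V$ with $\mathbb{E}|s(o)|<\infty$. If $s$ has law $\mathbb{P}$ and $\mathbb{P}\{s\text{ stabilizes}\}=1$, then the odometer $u_\infty$ of $s$ has $\Gamma$-invariant law. Moreover, if $\mathbb{E}\,s(o)=1$, then almost surely $s_\infty\equiv 1$ and $\Delta u_\infty=1-s$.
   Context: $\Delta u(x)=\sum_{y\sim x}(u(y)-u(x))$. For $s:V\to\mathbb{R}$, $\mathcal{F}_s=\{f\ge0: s+\Delta f\le1\}$; $s$ stabilizes if $\mathcal{F}_s\ne\emptyset$; its odometer is $u_\infty(x)=\inf\{f(x):f\in\mathcal{F}_s\}$ and its stabilization is $s_\infty=s+\Delta u_\infty$. A random function has $\Gamma$-invariant law if its law is preserved by $(T_\alpha f)(x)=f(\alpha^{-1}x)$ for all $\alpha\in\Gamma$. *)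

theory Defs
  imports "HOL-Probability.Probability"
begin

text \<open>A graph on the vertex type 'v is given by a symmetric irreflexive
adjacency relation E; the vertex set is UNIV.\<close>

definition graph_laplacian :: "('v \<Rightarrow> 'v \<Rightarrow> bool) \<Rightarrow> ('v \<Rightarrow> real) \<Rightarrow> 'v \<Rightarrow> real" where
  "graph_laplacian E u x = (\<Sum>y\<in>{y. E x y}. u y - u x)"

definition simple_graph :: "('v \<Rightarrow> 'v \<Rightarrow> bool) \<Rightarrow> bool" where
  "simple_graph E \<longleftrightarrow> (\<forall>x y. E x y \<longrightarrow> E y x) \<and> (\<forall>x. \<not> E x x)"

definition locally_finite :: "('v \<Rightarrow> 'v \<Rightarrow> bool) \<Rightarrow> bool" where
  "locally_finite E \<longleftrightarrow> (\<forall>x. finite {y. E x y})"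

definition connected_graph :: "('v \<Rightarrow> 'v \<Rightarrow> bool) \<Rightarrow> bool" where
  "connected_graph E \<longleftrightarrow> (\<forall>x y. E\<^sup>*\<^sup>* x y)"

definition graph_aut :: "('v \<Rightarrow> 'v \<Rightarrow> bool) \<Rightarrow> ('v \<Rightarrow> 'v) set" where
  "graph_aut E = {\<alpha>. bij \<alpha> \<and> (\<forall>x y. E x y \<longleftrightarrow> E (\<alpha> x) (\<alpha> y))}"

definition vertex_transitive :: "('v \<Rightarrow> 'v \<Rightarrow> bool) \<Rightarrow> bool" where
  "vertex_transitive E \<longleftrightarrow> (\<forall>x y. \<exists>\<alpha>\<in>graph_aut E. \<alpha> x = y)"

definition transitive_aut_group :: "('v \<Rightarrow> 'v \<Rightarrow> bool) \<Rightarrow> ('v \<Rightarrow> 'v) set \<Rightarrow> bool" where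
  "transitive_aut_group E \<Gamma> \<longleftrightarrow>
     \<Gamma> \<subseteq> graph_aut E \<and> id \<in> \<Gamma> \<and>
     (\<forall>\<alpha>\<in>\<Gamma>. \<forall>\<beta>\<in>\<Gamma>. \<alpha> \<circ> \<beta> \<in> \<Gamma>) \<and> (\<forall>\<alpha>\<in>\<Gamma>. inv \<alpha> \<in> \<Gamma>) \<and>
     (\<forall>x y. \<exists>\<alpha>\<in>\<Gamma>. \<alpha> x = y)"

definition shift :: "('v \<Rightarrow> 'v) \<Rightarrow> ('v \<Rightarrow> real) \<Rightarrow> ('v \<Rightarrow> real)" where
  "shift \<alpha> f = (\<lambda>x. f (inv \<alpha> x))"

abbreviation config_space :: "('v \<Rightarrow> real) measure" where
  "config_space \<equiv> PiM UNIV (\<lambda>_. borel)"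

definition invariant_law :: "('v \<Rightarrow> 'v) set \<Rightarrow> ('v \<Rightarrow> real) measure \<Rightarrow> bool" where
  "invariant_law \<Gamma> Q \<longleftrightarrow> (\<forall>\<alpha>\<in>\<Gamma>. distr Q config_space (shift \<alpha>) = Q)"

definition ergodic_law :: "('v \<Rightarrow> 'v) set \<Rightarrow> ('v \<Rightarrow> real) measure \<Rightarrow> bool" where
  "ergodic_law \<Gamma> Q \<longleftrightarrow>
     (\<forall>A\<in>sets Q. (\<forall>\<alpha>\<in>\<Gamma>. shift \<alpha> -` A \<inter> space Q = A) \<longrightarrow>
        measure Q A = 0 \<or> measure Q A = 1)"

definition stab_set :: "('v \<Rightarrow> 'v \<Rightarrow> bool) \<Rightarrow> ('v \<Rightarrow> real) \<Rightarrow> ('v \<Rightarrow> real) set" where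
  "stab_set E s = {f. (\<forall>x. f x \<ge> 0) \<and> (\<forall>x. s x + graph_laplacian E f x \<le> 1)}"

definition stabilizes :: "('v \<Rightarrow> 'v \<Rightarrow> bool) \<Rightarrow> ('v \<Rightarrow> real) \<Rightarrow> bool" where
  "stabilizes E s \<longleftrightarrow> stab_set E s \<noteq> {}"

definition odometer :: "('v \<Rightarrow> 'v \<Rightarrow> bool) \<Rightarrow> ('v \<Rightarrow> real) \<Rightarrow> ('v \<Rightarrow> real)" where
  "odometer E s = (\<lambda>x. Inf ((\<lambda>f. f x) ` stab_set E s))"

definition stabilization :: "('v \<Rightarrow> 'v \<Rightarrow> bool) \<Rightarrow> ('v \<Rightarrow> real) \<Rightarrow> ('v \<Rightarrow> real)" where
  "stabilization E s = (\<lambda>x. s x + graph_laplacian E (odometer E s) x)"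

end

theory Submission
  imports Defs
begin


definition Phi :: "('v \<Rightarrow> 'v \<Rightarrow> bool) \<Rightarrow> ('v \<Rightarrow> real) \<Rightarrow> ('v \<Rightarrow> real) \<Rightarrow> 'v \<Rightarrow> real" where
  "Phi E s f x = max 0 (((\<Sum>y\<in>{y. E x y}. f y) + s x - 1) / real (card {y. E x y}))"

primrec Uit :: "('v \<Rightarrow> 'v \<Rightarrow> bool) \<Rightarrow> ('v \<Rightarrow> real) \<Rightarrow> nat \<Rightarrow> 'v \<Rightarrow> real" where
  "Uit E s 0 = (\<lambda>_. 0)"
| "Uit E s (Suc n) = Phi E s (Uit E s n)"

lemma lap_eq:
  assumes "finite {y. E x y}"
  shows "graph_laplacian E f x = (\<Sum>y\<in>{y. E x y}. f y) - real (card {y. E x y}) * f x"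
  unfolding graph_laplacian_def using assms by (simp add: sum_subtractf)

lemma stab_iff:
  assumes fin: "\<And>x. finite {y. E x y}" and ne: "\<And>x. {y. E x y} \<noteq> {}"
  shows "f \<in> stab_set E s \<longleftrightarrow> (\<forall>x. Phi E s f x \<le> f x)"
proof -
  have *: "(0 \<le> f x \<and> s x + graph_laplacian E f x \<le> 1) \<longleftrightarrow> Phi E s f x \<le> f x" for x
  proof -
    have d: "real (card {y. E x y}) > 0" using fin[of x] ne[of x] by (simp add: card_gt_0_iff)
    have "s x + graph_laplacian E f x \<le> 1 \<longleftrightarrow>
          ((\<Sum>y\<in>{y. E x y}. f y) + s x - 1) / real (card {y. E x y}) \<le> f x"
      using d by (simp add: lap_eq[OF fin] pos_divide_le_eq algebra_simps)
    then show ?thesis unfolding Phi_def by auto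
  qed
  show ?thesis unfolding stab_set_def using * by blast
qed

lemma Phi_mono:
  assumes fin: "\<And>x. finite {y. E x y}" and "\<And>x. f x \<le> g x"
  shows "Phi E s f x \<le> Phi E s g x"
  unfolding Phi_def
  by (intro max.mono order_refl divide_right_mono add_right_mono diff_right_mono sum_mono assms) auto

lemma Uit_mono:
  assumes fin: "\<And>x. finite {y. E x y}"
  shows "Uit E s n x \<le> Uit E s (Suc n) x"
proof (induction n arbitrary: x)
  case 0 then show ?case by (simp add: Phi_def)
next
  case (Suc n) then show ?case by (simp add: Phi_mono[OF fin])
qed

lemma Uit_incseq:
  assumes fin: "\<And>x. finite {y. E x y}"
  shows "incseq (\<lambda>n. Uit E s n x)"
  by (rule incseq_SucI) (rule Uit_mono[OF fin])

lemma Uit_le: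
  assumes fin: "\<And>x. finite {y. E x y}" and ne: "\<And>x. {y. E x y} \<noteq> {}"
    and f: "f \<in> stab_set E s"
  shows "Uit E s n x \<le> f x"
proof (induction n arbitrary: x)
  case 0 then show ?case using f by (simp add: stab_set_def)
next
  case (Suc n)
  have "Phi E s (Uit E s n) x \<le> Phi E s f x" by (rule Phi_mono[OF fin]) (use Suc in auto)
  also have "\<dots> \<le> f x" using f stab_iff[of E, OF fin ne, of f s] by blast
  finally show ?case by simp
qed

lemma Uit_lim:
  assumes fin: "\<And>x. finite {y. E x y}" and ne: "\<And>x. {y. E x y} \<noteq> {}"
    and bdd: "\<And>x. bdd_above (range (\<lambda>n. Uit E s n x))"
  shows "(\<lambda>x. lim (\<lambda>n. Uit E s n x)) \<in> stab_set E s"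
    and "\<And>f x. f \<in> stab_set E s \<Longrightarrow> lim (\<lambda>n. Uit E s n x) \<le> f x"
    and "\<And>x. (\<lambda>n. Uit E s n x) \<longlonglongrightarrow> lim (\<lambda>n. Uit E s n x)"
proof -
  define w where "w = (\<lambda>x. lim (\<lambda>n. Uit E s n x))"
  have L: "(\<lambda>n. Uit E s n x) \<longlonglongrightarrow> w x" for x
  proof -
    have "(\<lambda>n. Uit E s n x) \<longlonglongrightarrow> (SUP n. Uit E s n x)"
      by (rule LIMSEQ_incseq_SUP[OF bdd Uit_incseq[OF fin]])
    then show ?thesis unfolding w_def by (simp add: limI)
  qed
  then show "\<And>x. (\<lambda>n. Uit E s n x) \<longlonglongrightarrow> lim (\<lambda>n. Uit E s n x)" unfolding w_def .
  have "Phi E s w x = w x" for x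
  proof -
    have "(\<lambda>n. Phi E s (Uit E s n) x) \<longlonglongrightarrow> Phi E s w x"
      unfolding Phi_def
      by (intro tendsto_intros L) (use fin ne in \<open>auto simp: card_eq_0_iff\<close>)
    moreover have "(\<lambda>n. Phi E s (Uit E s n) x) \<longlonglongrightarrow> w x"
      using LIMSEQ_Suc[OF L[of x]] by simp
    ultimately show ?thesis by (rule LIMSEQ_unique)
  qed
  then show "(\<lambda>x. lim (\<lambda>n. Uit E s n x)) \<in> stab_set E s"
    unfolding w_def[symmetric] using stab_iff[of E, OF fin ne, of w s] by auto
  show "lim (\<lambda>n. Uit E s n x) \<le> f x" if "f \<in> stab_set E s" for f x
    using L[of x] Uit_le[OF fin ne that] unfolding w_def
    by (intro LIMSEQ_le_const2) auto
qed



lemma od_char: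
  assumes fin: "\<And>x. finite {y. E x y}" and ne: "\<And>x. {y. E x y} \<noteq> {}"
  shows "stabilizes E s \<longleftrightarrow> (\<forall>x. bdd_above (range (\<lambda>n. Uit E s n x)))" (is "?A \<longleftrightarrow> ?B")
    and "odometer E s = (if (\<forall>x. bdd_above (range (\<lambda>n. Uit E s n x)))
           then (\<lambda>x. lim (\<lambda>n. Uit E s n x)) else (\<lambda>x. Inf {}))"
    and "stabilizes E s \<Longrightarrow> odometer E s \<in> stab_set E s"
proof -
  have AB: "?A \<longleftrightarrow> ?B"
  proof
    assume ?A
    then obtain f where f: "f \<in> stab_set E s" unfolding stabilizes_def by auto
    show ?B using Uit_le[of E, OF fin ne f] by (auto simp: bdd_above_def)
  next
    assume ?B
    then show ?A using Uit_lim(1)[of E, OF fin ne] unfolding stabilizes_def by blast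
  qed
  then show "?A \<longleftrightarrow> ?B" .
  have od: "odometer E s = (\<lambda>x. lim (\<lambda>n. Uit E s n x))" if ?B
  proof
    fix x
    show "odometer E s x = lim (\<lambda>n. Uit E s n x)"
      unfolding odometer_def
      by (rule cInf_eq_minimum) (use Uit_lim[of E, OF fin ne] that in auto)
  qed
  show "odometer E s = (if ?B then (\<lambda>x. lim (\<lambda>n. Uit E s n x)) else (\<lambda>x. Inf {}))"
  proof (cases ?B)
    case True then show ?thesis using od by simp
  next
    case False
    then have "stab_set E s = {}" using AB unfolding stabilizes_def
      using [[show_types]] by auto
    then show ?thesis using False unfolding odometer_def by (simp only: if_False image_empty)
  qed
  show "odometer E s \<in> stab_set E s" if ?A
    using od AB that Uit_lim(1)[of E, OF fin ne] by auto
qed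

lemma countable_V:
  fixes E :: "'v \<Rightarrow> 'v \<Rightarrow> bool"
  assumes conn: "connected_graph E" and fin: "\<And>x. finite {y. E x y}"
  shows "countable (UNIV :: 'v set)"
proof -
  fix x0 :: 'v
  have F: "finite {y. (E ^^ n) x0 y}" for n
  proof (induction n)
    case 0 then show ?case by simp
  next
    case (Suc n)
    have "{y. (E ^^ Suc n) x0 y} = (\<Union>z\<in>{z. (E ^^ n) x0 z}. {y. E z y})" by auto
    then show ?case using Suc fin by simp
  qed
  have "UNIV = (\<Union>n. {y. (E ^^ n) x0 y})"
    using conn unfolding connected_graph_def rtranclp_power by auto
  then show ?thesis using F by (metis countable_UN countable_finite countableI_type)
qed

lemma ne_V:
  fixes E :: "'v \<Rightarrow> 'v \<Rightarrow> bool"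
  assumes conn: "connected_graph E" and inf: "infinite (UNIV :: 'v set)"
  shows "{y. E x y} \<noteq> {}"
proof -
  obtain y :: 'v where "y \<noteq> x" using inf by (metis UNIV_eq_I finite.intros singletonI insertI1 finite_insert)
  moreover have "E\<^sup>*\<^sup>* x y" using conn unfolding connected_graph_def by auto
  ultimately show ?thesis by (metis converse_rtranclpE empty_Collect_eq)
qed

lemma aut_inv:
  assumes "\<alpha> \<in> graph_aut E" shows "inv \<alpha> \<in> graph_aut E"
proof -
  have b: "bij \<alpha>" and e: "\<And>x y. E x y \<longleftrightarrow> E (\<alpha> x) (\<alpha> y)" using assms by (auto simp: graph_aut_def)
  have "E x y \<longleftrightarrow> E (inv \<alpha> x) (inv \<alpha> y)" for x y
    using e[of "inv \<alpha> x" "inv \<alpha> y"] b by (simp add: bij_is_surj surj_f_inv_f)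
  then show ?thesis using b bij_imp_bij_inv unfolding graph_aut_def by auto
qed

lemma lap_shift:
  assumes "\<alpha> \<in> graph_aut E"
  shows "graph_laplacian E (shift \<alpha> f) x = graph_laplacian E f (inv \<alpha> x)"
proof -
  have b: "bij \<alpha>" and e: "\<And>x y. E x y \<longleftrightarrow> E (\<alpha> x) (\<alpha> y)" using assms by (auto simp: graph_aut_def)
  have S: "{y. E x y} = \<alpha> ` {z. E (inv \<alpha> x) z}"
  proof -
    have "E x y \<longleftrightarrow> E (inv \<alpha> x) (inv \<alpha> y)" for y
      using e[of "inv \<alpha> x" "inv \<alpha> y"] b by (simp add: bij_is_surj surj_f_inv_f)
    then show ?thesis using b
      by (auto simp: image_iff bij_is_surj surj_f_inv_f bij_is_inj inv_f_f) (metis bij_inv_eq_iff b)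
  qed
  show ?thesis unfolding graph_laplacian_def S
    by (subst sum.reindex[OF inj_on_subset[OF bij_is_inj[OF b] subset_UNIV]]) (use b in \<open>auto simp: bij_is_inj shift_def inv_f_f\<close>)
qed

lemma shift_stab:
  assumes "\<alpha> \<in> graph_aut E" "f \<in> stab_set E s"
  shows "shift \<alpha> f \<in> stab_set E (shift \<alpha> s)"
proof -
  have "shift \<alpha> s x + graph_laplacian E (shift \<alpha> f) x \<le> 1" for x
    using assms(2) unfolding lap_shift[OF assms(1)] by (auto simp: stab_set_def shift_def)
  then show ?thesis using assms(2) by (auto simp: stab_set_def shift_def)
qed

lemma shift_inv_shift:
  assumes "\<alpha> \<in> graph_aut E" shows "shift (inv \<alpha>) (shift \<alpha> f) = f"
proof -
  have b: "bij \<alpha>" using assms by (auto simp: graph_aut_def)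
  show ?thesis unfolding shift_def using b by (simp add: inv_inv_eq bij_is_inj)
qed

lemma shift_shift_inv:
  assumes "\<alpha> \<in> graph_aut E" shows "shift \<alpha> (shift (inv \<alpha>) f) = f"
proof -
  have b: "bij \<alpha>" using assms by (auto simp: graph_aut_def)
  show ?thesis unfolding shift_def using b by (simp add: inv_inv_eq bij_is_surj surj_f_inv_f)
qed

lemma stab_shift:
  assumes "\<alpha> \<in> graph_aut E"
  shows "stab_set E (shift \<alpha> s) = shift \<alpha> ` stab_set E s"
proof
  show "shift \<alpha> ` stab_set E s \<subseteq> stab_set E (shift \<alpha> s)" using shift_stab[OF assms] by auto
next
  show "stab_set E (shift \<alpha> s) \<subseteq> shift \<alpha> ` stab_set E s"
  proof
    fix g assume "g \<in> stab_set E (shift \<alpha> s)"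
    then have "shift (inv \<alpha>) g \<in> stab_set E s"
      using shift_stab[OF aut_inv[OF assms]] shift_inv_shift[OF assms] by metis
    then show "g \<in> shift \<alpha> ` stab_set E s" using shift_shift_inv[OF assms] by (metis image_eqI)
  qed
qed

lemma od_shift:
  assumes "\<alpha> \<in> graph_aut E"
  shows "odometer E (shift \<alpha> s) = shift \<alpha> (odometer E s)"
  unfolding odometer_def stab_shift[OF assms] image_image by (simp add: shift_def)

lemma Uit_meas:
  assumes fin: "\<And>x. finite {y. E x y}"
  shows "(\<lambda>s. Uit E s n x) \<in> borel_measurable (PiM UNIV (\<lambda>_. borel))"
proof (induction n arbitrary: x)
  case 0 then show ?case by simp
next
  case (Suc n)
  note Suc.IH[measurable]
  show ?case unfolding Uit.simps Phi_def by measurable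
qed

lemma od_meas:
  assumes fin: "\<And>x. finite {y. E x y}" and ne: "\<And>x. {y. E x y} \<noteq> {}"
    and cnt: "countable (UNIV :: 'v set)"
  shows "odometer E \<in> measurable (PiM UNIV (\<lambda>_. borel)) (PiM (UNIV::'v set) (\<lambda>_. borel))"
proof -
  note Uit_meas[OF fin, measurable]
  have bdd: "bdd_above (range g) \<longleftrightarrow> (\<exists>k::nat. \<forall>n. g n \<le> real k)" for g :: "nat \<Rightarrow> real"
    by (auto simp: bdd_above_def) (meson order_trans real_arch_simple)
  have P: "Measurable.pred (PiM UNIV (\<lambda>_. borel)) (\<lambda>s. \<forall>x\<in>UNIV. bdd_above (range (\<lambda>n. Uit E s n x)))"
    unfolding bdd by (intro measurable_pred_countable[OF cnt]) measurable
  have "(\<lambda>s. odometer E s x) \<in> borel_measurable (PiM UNIV (\<lambda>_. borel))" for x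
  proof -
    have "(\<lambda>s. odometer E s x) = (\<lambda>s. if (\<forall>x\<in>UNIV. bdd_above (range (\<lambda>n. Uit E s n x)))
           then lim (\<lambda>n. Uit E s n x) else Inf {})"
      using od_char(2)[of E, OF fin ne] by auto
    also have "\<dots> \<in> borel_measurable (PiM UNIV (\<lambda>_. borel))"
      using P by (intro measurable_If) (auto simp: pred_def)
    finally show ?thesis .
  qed
  then show ?thesis by (intro measurable_PiM_single'[where f="\<lambda>x s. odometer E s x", simplified]) auto
qed



definition trunc :: "nat \<Rightarrow> real \<Rightarrow> real" where
  "trunc M a = min (max a 0) (real M)"

lemma trunc_bound:
  assumes "finite A" "\<forall>y\<in>A. 0 \<le> u y" "0 \<le> a" "(\<Sum>y\<in>A. u y - a) \<le> c"
  shows "(\<Sum>y\<in>A. trunc M (u y) - trunc M a) \<le> \<bar>c\<bar>"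
proof (cases "a \<le> real M")
  case True
  have "(\<Sum>y\<in>A. trunc M (u y) - trunc M a) \<le> (\<Sum>y\<in>A. u y - a)"
    using True assms by (intro sum_mono) (auto simp: trunc_def)
  then show ?thesis using assms(4) by linarith
next
  case False
  have "(\<Sum>y\<in>A. trunc M (u y) - trunc M a) \<le> (\<Sum>y\<in>A. 0)"
    using False assms by (intro sum_mono) (auto simp: trunc_def)
  then show ?thesis by simp
qed

lemma trunc_eq:
  assumes "finite A" "\<forall>y\<in>A. 0 \<le> u y" "0 \<le> a"
  shows "\<forall>\<^sub>F M in sequentially. (\<Sum>y\<in>A. trunc M (u y) - trunc M a) = (\<Sum>y\<in>A. u y - a)"
proof -
  define B where "B = a + (\<Sum>y\<in>A. u y)"
  have ub: "u y \<le> B" if "y \<in> A" for y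
    using member_le_sum[of y A u] that assms unfolding B_def by auto
  have aB: "a \<le> B" using assms unfolding B_def by (simp add: sum_nonneg)
  show ?thesis
  proof (rule eventually_sequentiallyI[of "nat \<lceil>B\<rceil>"])
    fix M assume "nat \<lceil>B\<rceil> \<le> M"
    then have "B \<le> real M" by linarith
    then show "(\<Sum>y\<in>A. trunc M (u y) - trunc M a) = (\<Sum>y\<in>A. u y - a)"
      using ub aB assms by (intro sum.cong) (auto simp: trunc_def, smt (verit))
  qed
qed

lemma shift_meas: "shift \<alpha> \<in> measurable (PiM UNIV (\<lambda>_. borel)) (PiM (UNIV :: 'v set) (\<lambda>_. borel :: real measure))"
  unfolding shift_def
  by (rule measurable_PiM_single'[where f="\<lambda>x s. s (inv \<alpha> x)", simplified]) auto



theorem lemma4p3: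
  fixes E :: "'v \<Rightarrow> 'v \<Rightarrow> bool" and v\<^sub>0 :: 'v
    and \<Gamma> :: "('v \<Rightarrow> 'v) set" and P :: "('v \<Rightarrow> real) measure"
  assumes "simple_graph E" and "infinite (UNIV :: 'v set)" and "connected_graph E"
    and "locally_finite E" and "vertex_transitive E"
    and "transitive_aut_group E \<Gamma>"
    and "prob_space P" and "sets P = sets config_space"
    and "invariant_law \<Gamma> P" and "ergodic_law \<Gamma> P"
    and "integrable P (\<lambda>s. s v\<^sub>0)"
    and "AE s in P. stabilizes E s"
  shows "invariant_law \<Gamma> (distr P config_space (odometer E)) \<and>
         ((\<integral>s. s v\<^sub>0 \<partial>P) = 1 \<longrightarrow>
           (AE s in P. (\<forall>x. stabilization E s x = 1) \<and>
                      (\<forall>x. graph_laplacian E (odometer E s) x = 1 - s x)))"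
proof -
  let ?N = "config_space :: ('v \<Rightarrow> real) measure"
  have fin: "\<And>x. finite {y. E x y}" using assms(4) by (simp add: locally_finite_def)
  have ne: "\<And>x. {y. E x y} \<noteq> {}" using ne_V[OF assms(3,2)] .
  have cnt: "countable (UNIV :: 'v set)" using countable_V[OF assms(3) fin] .
  have odN: "odometer E \<in> measurable ?N ?N" using od_meas[of E, OF fin ne cnt] .
  have odP: "odometer E \<in> measurable P ?N" using odN measurable_cong_sets[OF assms(8) refl] by blast
  have shP: "shift \<alpha> \<in> measurable P ?N" for \<alpha>
    using shift_meas measurable_cong_sets[OF assms(8) refl] by blast
  have GA: "\<Gamma> \<subseteq> graph_aut E" and trans: "\<And>x y. \<exists>\<alpha>\<in>\<Gamma>. \<alpha> x = y"
    using assms(6) unfolding transitive_aut_group_def by auto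
  have inv: "\<And>\<alpha>. \<alpha> \<in> \<Gamma> \<Longrightarrow> distr P ?N (shift \<alpha>) = P"
    using assms(9) unfolding invariant_law_def by auto
  have part1: "invariant_law \<Gamma> (distr P ?N (odometer E))"
    unfolding invariant_law_def
  proof
    fix \<alpha> assume a: "\<alpha> \<in> \<Gamma>"
    have "distr (distr P ?N (odometer E)) ?N (shift \<alpha>) = distr P ?N (shift \<alpha> \<circ> odometer E)"
      by (rule distr_distr[OF shift_meas odP])
    also have "shift \<alpha> \<circ> odometer E = odometer E \<circ> shift \<alpha>"
      using od_shift[of \<alpha> E] a GA by (auto simp: fun_eq_iff)
    also have "distr P ?N (odometer E \<circ> shift \<alpha>) = distr (distr P ?N (shift \<alpha>)) ?N (odometer E)"
      by (rule distr_distr[OF odN shP, symmetric])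
    also have "\<dots> = distr P ?N (odometer E)" using inv[OF a] by simp
    finally show "distr (distr P ?N (odometer E)) ?N (shift \<alpha>) = distr P ?N (odometer E)" .
  qed
  interpret prob_space P by (rule assms(7))
  have toP: "f \<in> borel_measurable P" if "f \<in> borel_measurable ?N" for f :: "_ \<Rightarrow> real"
    using that measurable_cong_sets[OF assms(8) refl] by blast
  have IT: "(\<integral>s. F s \<partial>P) = (\<integral>s. F (shift \<alpha> s) \<partial>P)"
    if "\<alpha> \<in> \<Gamma>" "F \<in> borel_measurable ?N" for \<alpha> and F :: "_ \<Rightarrow> real"
  proof -
    have "(\<integral>s. F s \<partial>P) = (\<integral>s. F s \<partial>(distr P ?N (shift \<alpha>)))" using inv[OF that(1)] by simp
    also have "\<dots> = (\<integral>s. F (shift \<alpha> s) \<partial>P)" by (rule integral_distr[OF shP that(2)])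
    finally show ?thesis .
  qed
  have II: "integrable P F \<longleftrightarrow> integrable P (\<lambda>s. F (shift \<alpha> s))"
    if "\<alpha> \<in> \<Gamma>" "F \<in> borel_measurable ?N" for \<alpha> and F :: "_ \<Rightarrow> real"
  proof -
    have "integrable P F \<longleftrightarrow> integrable (distr P ?N (shift \<alpha>)) F" using inv[OF that(1)] by simp
    also have "\<dots> \<longleftrightarrow> integrable P (\<lambda>s. F (shift \<alpha> s))" by (rule integrable_distr_eq[OF shP that(2)])
    finally show ?thesis .
  qed
  have odc: "(\<lambda>s. odometer E s z) \<in> borel_measurable ?N" for z
    using measurable_compose[OF odN measurable_component_singleton[of z UNIV "\<lambda>_. borel"]] by simp
  have inv_eq: "inv \<alpha> y = x" if "\<alpha> \<in> \<Gamma>" "\<alpha> x = y" for \<alpha> x y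
    using that GA by (auto simp: graph_aut_def bij_is_inj inv_f_f)
  have od_sh: "odometer E (shift \<alpha> s) y = odometer E s x" if "\<alpha> \<in> \<Gamma>" "\<alpha> x = y" for \<alpha> x y s
    using od_shift[of \<alpha> E s] that GA inv_eq[OF that] by (auto simp: shift_def)
  have part2: "AE s in P. \<forall>x\<in>UNIV. s x + graph_laplacian E (odometer E s) x = 1"
    if one: "(\<integral>s. s v\<^sub>0 \<partial>P) = 1"
  proof (subst AE_ball_countable[OF cnt], intro ballI)
    fix x :: 'v
    obtain \<alpha>0 where a0: "\<alpha>0 \<in> \<Gamma>" "\<alpha>0 v\<^sub>0 = x" using trans by blast
    have sxN: "(\<lambda>s. s x) \<in> borel_measurable ?N" by measurable
    have shx: "shift \<alpha>0 s x = s v\<^sub>0" for s using inv_eq[OF a0] by (simp add: shift_def)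
    have sx_int: "integrable P (\<lambda>s. s x)" using II[OF a0(1) sxN] shx assms(11) by simp
    have sx1: "(\<integral>s. s x \<partial>P) = 1" using IT[OF a0(1) sxN] shx one by simp
    define lap where "lap s = graph_laplacian E (odometer E s) x" for s
    have lapN: "lap \<in> borel_measurable ?N"
      unfolding lap_def graph_laplacian_def using odc by (intro borel_measurable_sum borel_measurable_diff) auto
    have AEst: "AE s in P. (\<forall>z. 0 \<le> odometer E s z) \<and> s x + lap s \<le> 1"
      using assms(12) by eventually_elim (use od_char(3)[of E, OF fin ne] in \<open>auto simp: stab_set_def lap_def\<close>)
    define Dm where "Dm M s = (\<Sum>y\<in>{y. E x y}. trunc M (odometer E s y) - trunc M (odometer E s x))" for M s
    note odc[measurable]
    have Dm_N: "Dm M \<in> borel_measurable ?N" for M unfolding Dm_def trunc_def by measurable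
    have tr_N: "(\<lambda>s. trunc M (odometer E s z)) \<in> borel_measurable ?N" for M z
      unfolding trunc_def by measurable
    have tr_int: "integrable P (\<lambda>s. trunc M (odometer E s z))" for M z
      by (rule integrable_const_bound[where B="real M"]) (auto simp: trunc_def intro!: toP tr_N)
    have tr_eq: "(\<integral>s. trunc M (odometer E s y) \<partial>P) = (\<integral>s. trunc M (odometer E s x) \<partial>P)" for M y
    proof -
      obtain \<beta> where b: "\<beta> \<in> \<Gamma>" "\<beta> x = y" using trans by blast
      show ?thesis using IT[OF b(1) tr_N[of M y]] od_sh[OF b] by simp
    qed
    have Dm_int: "integrable P (Dm M)" for M
      unfolding Dm_def by (intro Bochner_Integration.integrable_sum Bochner_Integration.integrable_diff tr_int)
    have Dm0: "(\<integral>s. Dm M s \<partial>P) = 0" for M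
      unfolding Dm_def
      by (subst Bochner_Integration.integral_sum) (use tr_int in \<open>auto simp: Bochner_Integration.integral_diff intro!: Bochner_Integration.integrable_diff sum.neutral\<close>, metis tr_eq diff_self)
    define h where "h s = \<bar>1 - s x\<bar>" for s :: "'v \<Rightarrow> real"
    have h_int: "integrable P h" unfolding h_def using sx_int by auto
    have hN: "h \<in> borel_measurable ?N" unfolding h_def by measurable
    have Dm_le: "AE s in P. Dm M s \<le> h s" for M
      using AEst
    proof eventually_elim
      case (elim s)
      then show ?case unfolding Dm_def h_def
        by (intro trunc_bound fin) (auto simp: lap_def graph_laplacian_def)
    qed
    define f where "f M s = ennreal (h s - Dm M s)" for M s
    have nnf: "(\<integral>\<^sup>+s. f M s \<partial>P) = ennreal (\<integral>s. h s \<partial>P)" for M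
    proof -
      have "(\<integral>\<^sup>+s. f M s \<partial>P) = ennreal (\<integral>s. h s - Dm M s \<partial>P)"
        unfolding f_def using Dm_le[of M] h_int Dm_int[of M]
        by (intro nn_integral_eq_integral) (auto elim: eventually_mono)
      also have "(\<integral>s. h s - Dm M s \<partial>P) = (\<integral>s. h s \<partial>P)"
        using h_int Dm_int[of M] Dm0[of M] by (simp add: integral_diff)
      finally show ?thesis .
    qed
    have lim: "AE s in P. liminf (\<lambda>M. f M s) = ennreal (h s - lap s)"
      using AEst
    proof eventually_elim
      case (elim s)
      have "\<forall>\<^sub>F M in sequentially. Dm M s = lap s"
        using trunc_eq[OF fin, of x "odometer E s" "odometer E s x"] elim
        unfolding Dm_def lap_def graph_laplacian_def by auto
      then have "\<forall>\<^sub>F M in sequentially. f M s = ennreal (h s - lap s)"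
        unfolding f_def by (auto elim: eventually_mono)
      then have "(\<lambda>M. f M s) \<longlonglongrightarrow> ennreal (h s - lap s)" by (rule tendsto_eventually)
      then show ?case by (intro lim_imp_Liminf) auto
    qed
    define G where "G s = h s - lap s" for s :: "'v \<Rightarrow> real"
    have GN: "G \<in> borel_measurable ?N" unfolding G_def using hN lapN by measurable
    have G_nn: "AE s in P. 0 \<le> G s"
      using AEst by eventually_elim (auto simp: G_def h_def)
    have fN: "f M \<in> borel_measurable P" for M
      unfolding f_def using toP[OF hN] toP[OF Dm_N[of M]] by measurable
    have "(\<integral>\<^sup>+s. ennreal (G s) \<partial>P) = (\<integral>\<^sup>+s. liminf (\<lambda>M. f M s) \<partial>P)"
      using lim by (intro nn_integral_cong_AE) (auto simp: G_def elim: eventually_mono)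
    also have "\<dots> \<le> liminf (\<lambda>M. integral\<^sup>N P (f M))" by (rule nn_integral_liminf[OF fN])
    also have "\<dots> = ennreal (\<integral>s. h s \<partial>P)" unfolding nnf by (intro Liminf_const) auto
    finally have nnG: "(\<integral>\<^sup>+s. ennreal (G s) \<partial>P) \<le> ennreal (\<integral>s. h s \<partial>P)" .
    have G_int: "integrable P G"
      using nnG by (intro integrableI_nonneg toP GN G_nn) (auto simp: top.not_eq_extremum intro: le_less_trans)
    have "ennreal (\<integral>s. G s \<partial>P) \<le> ennreal (\<integral>s. h s \<partial>P)"
      using nnG nn_integral_eq_integral[OF G_int G_nn] by simp
    then have GI: "(\<integral>s. G s \<partial>P) \<le> (\<integral>s. h s \<partial>P)"
    proof -
      have "0 \<le> (\<integral>s. h s \<partial>P)" by (intro integral_nonneg_AE) (auto simp: h_def)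
      then show ?thesis using \<open>ennreal (\<integral>s. G s \<partial>P) \<le> ennreal (\<integral>s. h s \<partial>P)\<close> by simp
    qed
    define D where "D s = 1 - s x - lap s" for s :: "'v \<Rightarrow> real"
    have D_eq: "D = (\<lambda>s. G s - h s + (1 - s x))" by (auto simp: D_def G_def fun_eq_iff)
    have D_int: "integrable P D" unfolding D_eq using G_int h_int sx_int by auto
    have "(\<integral>s. D s \<partial>P) = (\<integral>s. G s \<partial>P) - (\<integral>s. h s \<partial>P) + (1 - (\<integral>s. s x \<partial>P))"
      unfolding D_eq using G_int h_int sx_int prob_space
      by (simp add: integral_add integral_diff)
    then have "(\<integral>s. D s \<partial>P) \<le> 0" using GI sx1 by simp
    moreover have D_nn: "AE s in P. 0 \<le> D s" using AEst by eventually_elim (auto simp: D_def)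
    ultimately have "(\<integral>s. D s \<partial>P) = 0" using integral_nonneg_AE[OF D_nn] by simp
    then have "AE s in P. D s = 0" using integral_nonneg_eq_0_iff_AE[OF D_int D_nn] by simp
    then show "AE s in P. s x + graph_laplacian E (odometer E s) x = 1"
      by eventually_elim (auto simp: D_def lap_def)
  qed
  show ?thesis
  proof (intro conjI impI)
    show "invariant_law \<Gamma> (distr P ?N (odometer E))" by (rule part1)
  next
    assume "(\<integral>s. s v\<^sub>0 \<partial>P) = 1"
    from part2[OF this] show "AE s in P. (\<forall>x. stabilization E s x = 1) \<and>
                      (\<forall>x. graph_laplacian E (odometer E s) x = 1 - s x)"
      by eventually_elim (auto simp: stabilization_def algebra_simps)
  qed
qed

end
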